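(* Let $G$ be a finite cyclic group. Then $g(OD(G))=3$ if and only if $|G|$ is a composite number.
   Context: For a finite group $G$, $o(x)$ denotes the order of $x\in G$. The order-divisor graph $OD(G)$ is the simple undirected graph with vertex set $G$, in which two distinct vertices $x,y$ are adjacent if and only if $o(x)\neq o(y)$ and either $o(x)\mid o(y)$ or $o(y)\mid o(x)$. The girth $g(\Gamma)$ of a graph $\Gamma$ is the length of a shortest cycle in $\Gamma$ (taken to be $0$ if $\Gamma$ has no cycle). *)

theory Defs
  imports "HOL-Algebra.Algebra" "HOL-Computational_Algebra.Primes"
begin

definition has_cycle_of_length :: "'a set \<Rightarrow> ('a \<Rightarrow> 'a \<Rightarrow> bool) \<Rightarrow> nat \<Rightarrow> bool" where
  "has_cycle_of_length V E k \<longleftrightarrow>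
     k \<ge> 3 \<and> (\<exists>v :: nat \<Rightarrow> 'a. inj_on v {..<k} \<and> v ` {..<k} \<subseteq> V \<and>
        (\<forall>i<k. E (v i) (v ((i + 1) mod k))))"

definition girth :: "'a set \<Rightarrow> ('a \<Rightarrow> 'a \<Rightarrow> bool) \<Rightarrow> nat" where
  "girth V E = (if \<exists>k. has_cycle_of_length V E k then (LEAST k. has_cycle_of_length V E k) else 0)"

definition od_adj :: "('a, 'b) monoid_scheme \<Rightarrow> 'a \<Rightarrow> 'a \<Rightarrow> bool" where
  "od_adj G x y \<longleftrightarrow> x \<noteq> y \<and> group.ord G x \<noteq> group.ord G y \<and>
     (group.ord G x dvd group.ord G y \<or> group.ord G y dvd group.ord G x)"

definition composite :: "nat \<Rightarrow> bool" where
  "composite n \<longleftrightarrow> n > 1 \<and> \<not> Factorial_Ring.prime n"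

end

theory Submission
  imports Defs
begin

lemma girth_3_iff:
  "girth V E = 3 \<longleftrightarrow> has_cycle_of_length V E 3"
proof
  assume h: "girth V E = 3"
  then have ex: "\<exists>k. has_cycle_of_length V E k" unfolding girth_def by (auto split: if_splits)
  then have "has_cycle_of_length V E (LEAST k. has_cycle_of_length V E k)" by (rule LeastI_ex)
  then show "has_cycle_of_length V E 3" using h ex unfolding girth_def by simp
next
  assume h: "has_cycle_of_length V E 3"
  have "(LEAST k. has_cycle_of_length V E k) = 3"
  proof (rule Least_equality)
    show "has_cycle_of_length V E 3" by fact
    show "\<And>y. has_cycle_of_length V E y \<Longrightarrow> 3 \<le> y" unfolding has_cycle_of_length_def by simp
  qed
  then show "girth V E = 3" using h unfolding girth_def by auto
qed

theorem mainTheorem5: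
  fixes G :: "('a, 'b) monoid_scheme"
  assumes "group G" and "finite (carrier G)" and "cyclic_group G"
  shows "girth (carrier G) (od_adj G) = 3 \<longleftrightarrow> composite (order G)"
proof -
  interpret group G by fact
  obtain g where g: "g \<in> carrier G" "subgroup_generated G {g} = G"
    using assms(3) unfolding cyclic_group_def by blast
  define n where "n = order G"
  have ordg: "ord g = n" using cyclic_order_is_ord[OF g(1)] g(2) n_def by simp
  have npos: "n > 0" using assms(2) n_def order_gt_0_iff_finite by blast
  show ?thesis unfolding girth_3_iff n_def[symmetric]
  proof
    assume "has_cycle_of_length (carrier G) (od_adj G) 3"
    then obtain v :: "nat \<Rightarrow> 'a" where v: "inj_on v {..<3}" "v ` {..<3} \<subseteq> carrier G"
        "\<forall>i<3. od_adj G (v i) (v ((i + 1) mod 3))"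
      unfolding has_cycle_of_length_def by blast
    have e: "od_adj G (v 0) (v 1)" "od_adj G (v 1) (v 2)" "od_adj G (v 2) (v 0)"
      using v(3)[rule_format, of 0] v(3)[rule_format, of 1] v(3)[rule_format, of 2] by (simp_all add: numeral_2_eq_2)
    have c: "v i \<in> carrier G" if "i < 3" for i using v(2) that by auto
    have d: "ord (v i) dvd n" if "i < 3" for i
      using ord_dvd_group_order[OF c[OF that]] n_def by simp
    show "composite n"
    proof (rule ccontr)
      assume nc: "\<not> composite n"
      have o1: "ord (v i) = 1 \<or> ord (v i) = n" if "i < 3" for i
      proof (cases "n = 1")
        case True then show ?thesis using d[OF that] by simp
      next
        case False
        then have "Factorial_Ring.prime n" using nc npos unfolding composite_def by simp
        then show ?thesis using d[OF that] by (simp add: prime_nat_iff)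
      qed
      have "ord (v 0) = 1 \<or> ord (v 0) = n" "ord (v 1) = 1 \<or> ord (v 1) = n"
         "ord (v 2) = 1 \<or> ord (v 2) = n" using o1[of 0] o1[of 1] o1[of 2] by simp_all
      then show False using e unfolding od_adj_def by (elim disjE) simp_all
    qed
  next
    assume "composite n"
    then obtain d where d: "d dvd n" "1 < d" "d < n"
    proof -
      assume "composite n"
      then obtain m where m: "m dvd n" "m \<noteq> 1" "m \<noteq> n" "n > 1"
        unfolding composite_def prime_nat_iff by auto
      then have "m \<le> n" "m \<noteq> 0" using dvd_imp_le by auto
      then show ?thesis using that[of m] m by auto
    qed
    define k where "k = n div d"
    have k0: "k \<noteq> 0" "k dvd n" using d npos unfolding k_def by auto
    define x where "x = g [^]\<^bsub>G\<^esub> k"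
    have x: "x \<in> carrier G" unfolding x_def using g(1) by simp
    have nd: "n div k = d"
    proof -
      obtain c where c: "n = d * c" using d(1) by blast
      then have "c > 0" using npos by (cases c) auto
      then show ?thesis using c d unfolding k_def by simp
    qed
    have ordx: "ord x = d" unfolding x_def using ord_pow[OF g(1), of k] k0 ordg d
      by (simp add: nd)
    define v where "v = (\<lambda>i::nat. if i = 0 then \<one>\<^bsub>G\<^esub> else if i = 1 then x else g)"
    have o: "ord (v 0) = 1" "ord (v 1) = d" "ord (v 2) = n"
      unfolding v_def using ordx ordg by auto
    have neq: "v 0 \<noteq> v 1" "v 1 \<noteq> v 2" "v 0 \<noteq> v 2"
      using o d by (metis less_not_refl less_trans)+
    have "od_adj G (v 0) (v 1)" "od_adj G (v 1) (v 2)" "od_adj G (v 2) (v 0)"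
      unfolding od_adj_def using o neq d by auto
    moreover have L: "{..<3::nat} = {0,1,2}" by auto
    moreover have "inj_on v {0,1,2}" using neq by (auto simp: inj_on_def)
    moreover have "v ` {0,1,2} \<subseteq> carrier G" using g(1) x by (auto simp: v_def)
    moreover have "\<forall>i<3. od_adj G (v i) (v ((i + 1) mod 3))"
    proof (intro allI impI)
      fix i :: nat assume "i < 3"
      then have "i = 0 \<or> i = 1 \<or> i = 2" by auto
      then show "od_adj G (v i) (v ((i + 1) mod 3))"
        using calculation(1,2,3) by (auto simp: numeral_2_eq_2)
    qed
    ultimately show "has_cycle_of_length (carrier G) (od_adj G) 3"
      unfolding has_cycle_of_length_def by (metis order_refl)
  qed
qed

end
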